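(* Let $\mu$ be a Lévy measure as in the context which is absolutely continuous with density satisfying $\frac{d\mu}{dz}(z)\ge\frac{1}{|z|^d\nu(|z|)}$ for a nondecreasing function $\nu:(0,\infty)\to[0,\infty]$ with $\lim_{s\to0^+}\nu(s)=0$. Let $(\phi_n)_{n\in\mathbb{N}}\subset L^2(\mathbb{R}^d)$ satisfy $$\sup_n\frac12\int_{\mathbb{R}^d}\int_{|z|>1/n}(\phi_n(x+z)-\phi_n(x))^2\,d\mu(z)\,dx<\infty.$$ Then $\lim_{|y|\to0}\sup_n\|\phi_n(\cdot+y)-\phi_n\|_{L^2(\mathbb{R}^d)}=0$.
   Context: $\mu$ is a symmetric nonnegative Radon measure on $\mathbb{R}^d\setminus\{0\}$ with $\int(|z|^2\wedge1)\,d\mu(z)<\infty$. *)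

theory Defs
  imports "HOL-Analysis.Analysis"
begin

definition L2_norm :: "('a::euclidean_space \<Rightarrow> real) \<Rightarrow> real" where
  "L2_norm g = sqrt (integral\<^sup>L lborel (\<lambda>x. (g x)^2))"

text \<open>Symmetric nonnegative measure on R^d minus the origin with the Levy integrability
  condition; measures of this form are given on the Borel sets of R^d and do not charge 0.\<close>
definition levy_measure :: "'a::euclidean_space measure \<Rightarrow> bool" where
  "levy_measure \<mu> \<longleftrightarrow> sets \<mu> = sets borel
     \<and> emeasure \<mu> {0} = 0
     \<and> (\<forall>A\<in>sets borel. emeasure \<mu> (uminus ` A) = emeasure \<mu> A)
     \<and> (\<integral>\<^sup>+ z. ennreal (min ((norm z)^2) 1) \<partial>\<mu>) < \<infinity>"

end

theory Submission
  imports Defs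
begin

lemma ennreal_tendsto_0I:
  fixes f :: "'b \<Rightarrow> ennreal"
  assumes "\<And>e::real. e > 0 \<Longrightarrow> eventually (\<lambda>y. f y \<le> ennreal e) F"
  shows "(f \<longlongrightarrow> 0) F"
proof (subst order_tendsto_iff, intro conjI allI impI)
  fix u :: ennreal assume "u > 0"
  then obtain v where v: "0 < v" "v < u" using dense by blast
  then have "v < \<infinity>" using less_le_trans[OF v(2) top_greatest] by simp
  then obtain e where e: "v = ennreal e" "e \<ge> 0" by (cases v) auto
  with v have "e > 0" by auto
  from assms[OF this] show "eventually (\<lambda>y. f y < u) F"
    by (rule eventually_mono) (use v e in auto)
qed auto

lemma nn_integral_translate:
  fixes h :: "'a::euclidean_space \<Rightarrow> ennreal"
  assumes "h \<in> borel_measurable borel"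
  shows "(\<integral>\<^sup>+ x. h (x + y) \<partial>lborel) = (\<integral>\<^sup>+ x. h x \<partial>lborel)"
proof -
  have "(\<integral>\<^sup>+ x. h x \<partial>lborel) = (\<integral>\<^sup>+ x. h x \<partial>distr lborel borel ((+) y))"
    by (simp add: lborel_distr_plus)
  also have "\<dots> = (\<integral>\<^sup>+ x. h (y + x) \<partial>lborel)"
    using assms by (subst nn_integral_distr) auto
  finally show ?thesis by (simp add: add.commute)
qed

lemma emeasure_translate:
  fixes A :: "'a::euclidean_space set"
  assumes "A \<in> sets borel"
  shows "emeasure lborel {x. x + y \<in> A} = emeasure lborel A"
proof -
  have m: "{x. x + y \<in> A} \<in> sets borel"
    using measurable_sets[OF _ assms, of "\<lambda>x. x + y" borel] by (simp add: vimage_def)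
  have "emeasure lborel {x. x + y \<in> A} = (\<integral>\<^sup>+ x. indicator {x. x + y \<in> A} x \<partial>lborel)"
    using m by (subst nn_integral_indicator) auto
  also have "\<dots> = (\<integral>\<^sup>+ x. indicator A (x + y) \<partial>lborel)"
    by (simp add: indicator_def)
  also have "\<dots> = emeasure lborel A"
    using assms by (subst nn_integral_translate) auto
  finally show ?thesis .
qed

lemma inner_compact:
  fixes S :: "'a::euclidean_space set"
  assumes S: "S \<in> sets borel" "emeasure lborel S < \<infinity>" and e: "e > 0"
  obtains K where "compact K" "K \<subseteq> S" "emeasure lborel (S - K) < ennreal e"
proof -
  define M where "M = density lborel (indicator S)"
  have sM: "sets M = sets borel" by (simp add: M_def)
  have eM: "emeasure M B = emeasure lborel (B \<inter> S)" if "B \<in> sets borel" for B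
  proof -
    have "emeasure M B = (\<integral>\<^sup>+ x. indicator S x * indicator B x \<partial>lborel)"
      unfolding M_def using that S(1) by (subst emeasure_density) (auto intro: borel_measurable_indicator)
    also have "\<dots> = (\<integral>\<^sup>+ x. indicator (B \<inter> S) x \<partial>lborel)"
      by (intro nn_integral_cong) (auto simp: indicator_def)
    also have "\<dots> = emeasure lborel (B \<inter> S)"
      using that S by (intro nn_integral_indicator) auto
    finally show ?thesis .
  qed
  have fin: "emeasure M (space M) \<noteq> \<infinity>"
  proof -
    have "space M = UNIV" by (simp add: M_def)
    then show ?thesis using eM[of UNIV] S by simp
  qed
  have "emeasure M S = (SUP K \<in> {K. K \<subseteq> S \<and> compact K}. emeasure M K)"
    by (rule inner_regular[OF sM fin S(1)])
  then have eq: "emeasure lborel S = (SUP K \<in> {K. K \<subseteq> S \<and> compact K}. emeasure lborel K)"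
    using eM S by (auto simp: Int_absorb1 Int_absorb2 compact_imp_closed intro!: SUP_cong)
  show ?thesis
  proof (cases "measure lborel S < e")
    case True
    have "emeasure lborel S = ennreal (measure lborel S)"
      using S by (intro emeasure_eq_ennreal_measure) auto
    then show ?thesis using that[of "{}"] True e by (simp add: ennreal_lessI)
  next
    case False
    have "ennreal (measure lborel S - e) < emeasure lborel S"
      using False e S by (simp add: emeasure_eq_ennreal_measure ennreal_lessI)
    then obtain K where K: "K \<subseteq> S" "compact K" "ennreal (measure lborel S - e) < emeasure lborel K"
      unfolding eq less_SUP_iff by blast
    have Kb: "K \<in> sets borel" using K by (simp add: compact_imp_closed borel_closed)
    have fK: "emeasure lborel K < \<infinity>" using K S emeasure_mono[of K S lborel] by auto
    have "measure lborel S - e < measure lborel K"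
    proof -
      have "emeasure lborel K = ennreal (measure lborel K)"
        using fK by (intro emeasure_eq_ennreal_measure) auto
      moreover have "0 \<le> measure lborel S - e" using False by simp
      ultimately show ?thesis using K(3) ennreal_less_iff by auto
    qed
    then have "measure lborel (S - K) < e"
      using K Kb S by (subst measure_Diff) (auto simp: emeasure_eq_ennreal_measure)
    then have "emeasure lborel (S - K) < ennreal e"
    proof -
      have "emeasure lborel (S - K) \<le> emeasure lborel S" by (rule emeasure_mono) (use S in auto)
      then have "emeasure lborel (S - K) = ennreal (measure lborel (S - K))"
        using S by (intro emeasure_eq_ennreal_measure) auto
      then show ?thesis using \<open>measure lborel (S - K) < e\<close> e by (simp add: ennreal_lessI)
    qed
    then show ?thesis using that K by blast
  qed
qed

definition tr_err :: "('a::euclidean_space \<Rightarrow> real) \<Rightarrow> 'a \<Rightarrow> ennreal" where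
  "tr_err g y = (\<integral>\<^sup>+ x. ennreal ((g (x + y) - g x)^2) \<partial>lborel)"

lemma translate_sets:
  fixes A :: "'a::euclidean_space set"
  assumes "A \<in> sets borel"
  shows "{x. x + y \<in> A} \<in> sets borel"
  using measurable_sets[OF _ assms, of "\<lambda>x. x + y" borel] by (simp add: vimage_def)

lemma tr_indicator:
  fixes S :: "'a::euclidean_space set"
  assumes S: "S \<in> sets borel" "emeasure lborel S < \<infinity>"
  shows "(tr_err (indicator S) \<longlongrightarrow> 0) (at 0)"
proof (rule ennreal_tendsto_0I)
  fix e :: real assume e: "e > 0"
  then have e4: "e/4 > 0" by simp
  obtain U where U: "open U" "S \<subseteq> U" "emeasure lborel (U - S) < ennreal (e/4)"
    using outer_regular_lborel[OF S(1) e4] by blast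
  obtain K where K: "compact K" "K \<subseteq> S" "emeasure lborel (S - K) < ennreal (e/4)"
    using inner_compact[OF S e4] by blast
  have "K \<subseteq> U" using K U by blast
  then obtain d where d: "d > 0" "(\<Union>x\<in>K. ball x d) \<subseteq> U"
    using compact_subset_open_imp_ball_epsilon_subset[OF K(1) U(1)] by blast
  have Kb: "K \<in> sets borel" using K by (simp add: compact_imp_closed borel_closed)
  have Ub: "U \<in> sets borel" using U by (simp add: borel_open)
  have bound: "tr_err (indicator S) y \<le> ennreal e" if y: "norm y < d" for y
  proof -
    define B1 where "B1 = {x. x + y \<in> S - K}"
    define B2 where "B2 = U - S"
    define B3 where "B3 = S - K"
    define B4 where "B4 = {x. x + y \<in> U - S}"
    have mB: "B1 \<in> sets borel" "B2 \<in> sets borel" "B3 \<in> sets borel" "B4 \<in> sets borel"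
      unfolding B1_def B2_def B3_def B4_def using S Kb Ub by (auto intro!: translate_sets)
    have pt: "ennreal ((indicator S (x + y) - indicator S x)^2)
        \<le> indicator B1 x + indicator B2 x + indicator B3 x + indicator B4 x" for x :: 'a
    proof -
      have a: "x + y \<in> K \<Longrightarrow> x \<in> U"
        using d(2) y by (force simp: dist_norm)
      have b: "x \<in> K \<Longrightarrow> x + y \<in> U"
        using d(2) y by (force simp: dist_norm)
      show ?thesis
        using a b unfolding B1_def B2_def B3_def B4_def
        by (cases "x + y \<in> S"; cases "x \<in> S") (auto simp: indicator_def)
    qed
    have "tr_err (indicator S) y \<le> (\<integral>\<^sup>+ x. indicator B1 x + indicator B2 x + indicator B3 x + indicator B4 x \<partial>lborel)"
      unfolding tr_err_def by (intro nn_integral_mono pt)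
    also have "\<dots> = emeasure lborel B1 + emeasure lborel B2 + emeasure lborel B3 + emeasure lborel B4"
      using mB by (simp add: nn_integral_add)
    also have "emeasure lborel B1 = emeasure lborel (S - K)"
      unfolding B1_def using S Kb by (intro emeasure_translate) auto
    also have "emeasure lborel B4 = emeasure lborel (U - S)"
      unfolding B4_def using S Ub by (intro emeasure_translate) auto
    also have "emeasure lborel (S - K) + emeasure lborel B2 + emeasure lborel B3 + emeasure lborel (U - S)
        \<le> ennreal (e/4) + ennreal (e/4) + ennreal (e/4) + ennreal (e/4)"
      unfolding B2_def B3_def using U(3) K(3) by (intro add_mono less_imp_le) auto
    also have "\<dots> = ennreal e"
      using e by (simp flip: ennreal_plus)
    finally show ?thesis .
  qed
  show "eventually (\<lambda>y. tr_err (indicator S) y \<le> ennreal e) (at 0)"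
    unfolding eventually_at using d bound by (auto simp: dist_norm)
qed

lemma meas_tr [measurable]:
  fixes g :: "'a::euclidean_space \<Rightarrow> real"
  assumes [measurable]: "g \<in> borel_measurable borel"
  shows "(\<lambda>x. ennreal ((g (x + y) - g x)^2)) \<in> borel_measurable borel"
  by measurable

lemma sq3: "((a::real) + b + c)^2 \<le> 3 * a^2 + 3 * b^2 + 3 * c^2"
  by (smt (verit) sum_squares_ge_zero power2_sum zero_le_power2 power2_diff)

lemma enn_le2:
  assumes "a \<le> 2*b + 2*c" "0 \<le> b" "0 \<le> c"
  shows "ennreal a \<le> 2 * ennreal b + 2 * ennreal c"
proof -
  have "ennreal (2*b + 2*c) = 2 * ennreal b + 2 * ennreal c"
    using assms(2,3) by (simp add: ennreal_plus ennreal_mult)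
  then show ?thesis using assms(1) ennreal_leI by metis
qed

lemma tr_err_add:
  fixes g h :: "'a::euclidean_space \<Rightarrow> real"
  assumes [measurable]: "g \<in> borel_measurable borel" "h \<in> borel_measurable borel"
  shows "tr_err (\<lambda>x. g x + h x) y \<le> 2 * tr_err g y + 2 * tr_err h y"
proof -
  have "tr_err (\<lambda>x. g x + h x) y \<le> (\<integral>\<^sup>+ x. 2 * ennreal ((g (x + y) - g x)^2) + 2 * ennreal ((h (x + y) - h x)^2) \<partial>lborel)"
    unfolding tr_err_def
  proof (intro nn_integral_mono)
    fix x
    have "(g (x + y) + h (x + y) - (g x + h x))^2 \<le> 2 * (g (x + y) - g x)^2 + 2 * (h (x + y) - h x)^2"
      by (smt (verit) sum_squares_ge_zero power2_sum zero_le_power2 power2_diff)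
    then show "ennreal ((g (x + y) + h (x + y) - (g x + h x))^2) \<le> 2 * ennreal ((g (x + y) - g x)^2) + 2 * ennreal ((h (x + y) - h x)^2)"
      by (intro enn_le2) auto
  qed
  also have "\<dots> = 2 * tr_err g y + 2 * tr_err h y"
    unfolding tr_err_def by (simp add: nn_integral_add nn_integral_cmult)
  finally show ?thesis .
qed

lemma tr_err_cmult:
  fixes g :: "'a::euclidean_space \<Rightarrow> real"
  assumes [measurable]: "g \<in> borel_measurable borel"
  shows "tr_err (\<lambda>x. c * g x) y = ennreal (c^2) * tr_err g y"
proof -
  have "tr_err (\<lambda>x. c * g x) y = (\<integral>\<^sup>+ x. ennreal (c^2) * ennreal ((g (x + y) - g x)^2) \<partial>lborel)"
    unfolding tr_err_def by (intro nn_integral_cong) (simp add: ennreal_mult[symmetric] power_mult_distrib right_diff_distrib[symmetric])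
  also have "\<dots> = ennreal (c^2) * tr_err g y"
    unfolding tr_err_def by (simp add: nn_integral_cmult)
  finally show ?thesis .
qed

definition Tcont :: "('a::euclidean_space \<Rightarrow> real) \<Rightarrow> bool" where
  "Tcont g \<longleftrightarrow> (tr_err g \<longlongrightarrow> 0) (at 0)"

lemma Tcont_add:
  fixes g h :: "'a::euclidean_space \<Rightarrow> real"
  assumes "g \<in> borel_measurable borel" "h \<in> borel_measurable borel" "Tcont g" "Tcont h"
  shows "Tcont (\<lambda>x. g x + h x)"
  unfolding Tcont_def
proof (rule tendsto_sandwich[where f="\<lambda>_. 0" and h="\<lambda>y. 2 * tr_err g y + 2 * tr_err h y"])
  show "\<forall>\<^sub>F n in at 0. 0 \<le> tr_err (\<lambda>x. g x + h x) n" by simp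
  show "\<forall>\<^sub>F n in at 0. tr_err (\<lambda>x. g x + h x) n \<le> 2 * tr_err g n + 2 * tr_err h n"
    using tr_err_add[OF assms(1,2)] by simp
  have "((\<lambda>y. 2 * tr_err g y + 2 * tr_err h y) \<longlongrightarrow> 2 * 0 + 2 * 0) (at 0)"
    using assms(3,4) unfolding Tcont_def by (intro tendsto_add ennreal_tendsto_cmult) auto
  then show "((\<lambda>y. 2 * tr_err g y + 2 * tr_err h y) \<longlongrightarrow> 0) (at 0)" by simp
qed simp

lemma Tcont_cmult:
  fixes g :: "'a::euclidean_space \<Rightarrow> real"
  assumes "g \<in> borel_measurable borel" "Tcont g"
  shows "Tcont (\<lambda>x. c * g x)"
proof -
  have "((\<lambda>y. ennreal (c^2) * tr_err g y) \<longlongrightarrow> ennreal (c^2) * 0) (at 0)"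
    using assms(2) unfolding Tcont_def by (intro ennreal_tendsto_cmult) auto
  then show ?thesis unfolding Tcont_def tr_err_cmult[OF assms(1)] by simp
qed

lemma Tcont_sum:
  fixes g :: "'b \<Rightarrow> 'a::euclidean_space \<Rightarrow> real"
  assumes "finite I" "\<And>i. i \<in> I \<Longrightarrow> g i \<in> borel_measurable borel" "\<And>i. i \<in> I \<Longrightarrow> Tcont (g i)"
  shows "Tcont (\<lambda>x. \<Sum>i\<in>I. g i x)"
  using assms
proof (induction I rule: finite_induct)
  case empty
  have "tr_err (\<lambda>x. 0::real) = (\<lambda>y::'a. 0)" by (auto simp: tr_err_def fun_eq_iff)
  then show ?case by (simp add: Tcont_def)
next
  case (insert a I)
  have m: "(\<lambda>x. \<Sum>i\<in>I. g i x) \<in> borel_measurable borel"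
    using insert by (intro borel_measurable_sum) auto
  show ?case using insert Tcont_add[OF _ m, of "g a"] by simp
qed

lemma Tcont_simple:
  fixes v :: "'a::euclidean_space \<Rightarrow> real"
  assumes vm[measurable]: "v \<in> borel_measurable borel" and fin: "finite (range v)"
    and L2: "(\<integral>\<^sup>+ x. ennreal ((v x)^2) \<partial>lborel) < \<infinity>"
  shows "Tcont v"
proof -
  define R where "R = range v - {0}"
  have fR: "finite R" using fin by (simp add: R_def)
  have eq: "v = (\<lambda>x. \<Sum>c\<in>R. c * indicator {x. v x = c} x)"
  proof
    fix x
    have "(\<Sum>c\<in>R. c * indicator {x. v x = c} x) = (\<Sum>c\<in>R. if c = v x then v x else 0)"
      by (intro sum.cong) (auto simp: indicator_def)
    also have "\<dots> = v x" using fR by (simp add: sum.delta' R_def)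
    finally show "v x = (\<Sum>c\<in>R. c * indicator {x. v x = c} x)" by simp
  qed
  have lev: "Tcont (indicator {x. v x = c})" if "c \<in> R" for c
  proof -
    have mb: "{x. v x = c} \<in> sets borel" by measurable
    have "ennreal (c^2) * emeasure lborel {x. v x = c} = (\<integral>\<^sup>+ x. ennreal (c^2) * indicator {x. v x = c} x \<partial>lborel)"
      using mb by (simp add: nn_integral_cmult_indicator)
    also have "\<dots> \<le> (\<integral>\<^sup>+ x. ennreal ((v x)^2) \<partial>lborel)"
      by (intro nn_integral_mono) (auto simp: indicator_def)
    also have "\<dots> < \<infinity>" by (rule L2)
    finally have "emeasure lborel {x. v x = c} < \<infinity>"
      using that by (auto simp: R_def ennreal_mult_less_top top.not_eq_extremum)
    then show ?thesis using tr_indicator[OF mb] by (simp add: Tcont_def)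
  qed
  have "Tcont (\<lambda>x. \<Sum>c\<in>R. c * indicator {x. v x = c} x)"
  proof (rule Tcont_sum[OF fR])
    fix c assume c: "c \<in> R"
    have mb: "{x. v x = c} \<in> sets borel" by measurable
    show "(\<lambda>x. c * indicator {x. v x = c} x) \<in> borel_measurable borel"
      using mb by measurable
    show "Tcont (\<lambda>x. c * indicator {x. v x = c} x)"
      using mb lev[OF c] by (intro Tcont_cmult) (auto intro: borel_measurable_indicator)
  qed
  then show ?thesis using eq by metis
qed

lemma enn3_eq:
  assumes "0 \<le> b" "0 \<le> c" "0 \<le> d"
  shows "ennreal (3*b + 3*c + 3*d) = 3 * ennreal b + 3 * ennreal c + 3 * ennreal d"
  using assms by (simp add: ennreal_plus ennreal_mult)

lemma enn_le3:
  assumes "a \<le> 3*b + 3*c + 3*d" "0 \<le> b" "0 \<le> c" "0 \<le> d"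
  shows "ennreal a \<le> 3 * ennreal b + 3 * ennreal c + 3 * ennreal d"
proof -
  have "ennreal (3*b + 3*c + 3*d) = 3 * ennreal b + 3 * ennreal c + 3 * ennreal d"
    using assms(2-4) by (simp add: ennreal_plus ennreal_mult)
  then show ?thesis using assms(1) ennreal_leI by metis
qed

lemma Tcont_approx:
  fixes g :: "'a::euclidean_space \<Rightarrow> real"
  assumes gm[measurable]: "g \<in> borel_measurable borel"
    and apx: "\<And>e. e > 0 \<Longrightarrow> \<exists>v. v \<in> borel_measurable borel \<and> Tcont v \<and>
                 (\<integral>\<^sup>+ x. ennreal ((g x - v x)^2) \<partial>lborel) \<le> ennreal e"
  shows "Tcont g"
  unfolding Tcont_def
proof (rule ennreal_tendsto_0I)
  fix e :: real assume e: "e > 0"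
  obtain v where vm[measurable]: "v \<in> borel_measurable borel" and Tv: "Tcont v"
    and vi: "(\<integral>\<^sup>+ x. ennreal ((g x - v x)^2) \<partial>lborel) \<le> ennreal (e/18)"
    using apx[of "e/18"] e by auto
  have ev: "eventually (\<lambda>y. tr_err v y \<le> ennreal (e/6)) (at 0)"
  proof -
    have "ennreal 0 < ennreal (e/6)" using e by (simp add: ennreal_lessI)
    then have "eventually (\<lambda>y. tr_err v y < ennreal (e/6)) (at 0)"
      using Tv unfolding Tcont_def order_tendsto_iff by simp
    then show ?thesis by (rule eventually_mono) simp
  qed
  show "eventually (\<lambda>y. tr_err g y \<le> ennreal e) (at 0)"
  proof (rule eventually_mono[OF ev])
    fix y assume Dv: "tr_err v y \<le> ennreal (e/6)"
    define H where "H = (\<integral>\<^sup>+ x. ennreal ((g x - v x)^2) \<partial>lborel)"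
    have "tr_err g y \<le> (\<integral>\<^sup>+ x. 3 * ennreal ((g (x + y) - v (x + y))^2) + 3 * ennreal ((v (x + y) - v x)^2)
           + 3 * ennreal ((g x - v x)^2) \<partial>lborel)"
      unfolding tr_err_def
    proof (intro nn_integral_mono enn_le3)
      fix x
      show "(g (x + y) - g x)\<^sup>2 \<le> 3 * (g (x + y) - v (x + y))\<^sup>2 + 3 * (v (x + y) - v x)\<^sup>2 + 3 * (g x - v x)\<^sup>2"
        using sq3[of "g (x + y) - v (x + y)" "v (x + y) - v x" "v x - g x"]
        by (simp add: power2_commute[of "v x"])
    qed auto
    also have "\<dots> = 3 * (\<integral>\<^sup>+ x. ennreal ((g (x + y) - v (x + y))^2) \<partial>lborel) + 3 * tr_err v y + 3 * H"
      unfolding tr_err_def H_def by (simp add: nn_integral_add nn_integral_cmult)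
    also have "(\<integral>\<^sup>+ x. ennreal ((g (x + y) - v (x + y))^2) \<partial>lborel) = H"
      unfolding H_def by (rule nn_integral_translate[of "\<lambda>x. ennreal ((g x - v x)^2)"]) measurable
    also have "3 * H + 3 * tr_err v y + 3 * H \<le> 3 * ennreal (e/18) + 3 * ennreal (e/6) + 3 * ennreal (e/18)"
      using vi Dv unfolding H_def by (intro add_mono mult_left_mono) auto
    also have "\<dots> = ennreal (3 * (e/18) + 3 * (e/6) + 3 * (e/18))"
      using e by (intro enn3_eq[symmetric]) auto
    also have "\<dots> \<le> ennreal e"
      using e by (intro ennreal_leI) simp
    finally show "tr_err g y \<le> ennreal e" .
  qed
qed

lemma Tcont_L2:
  fixes g :: "'a::euclidean_space \<Rightarrow> real"
  assumes gm[measurable]: "g \<in> borel_measurable borel"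
    and L2: "(\<integral>\<^sup>+ x. ennreal ((g x)^2) \<partial>lborel) < \<infinity>"
  shows "Tcont g"
proof (rule Tcont_approx[OF gm])
  fix e :: real assume e: "e > 0"
  obtain F where Fs: "\<And>i. simple_function borel (F i)"
    and Fl: "\<And>x. (\<lambda>i. F i x) \<longlonglongrightarrow> g x"
    and Fb: "\<And>i x. dist (F i x) 0 \<le> 2 * dist (g x) 0"
    using borel_measurable_implies_sequence_metric[OF gm, of 0] by auto
  have Fm[measurable]: "\<And>i. F i \<in> borel_measurable borel"
    using Fs by (simp add: borel_measurable_simple_function)
  have Fb': "\<bar>F i x\<bar> \<le> 2 * \<bar>g x\<bar>" for i x using Fb[of i x] by simp
  have m1: "\<And>i. (\<lambda>x. ennreal ((g x - F i x)^2)) \<in> borel_measurable lborel" by measurable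
  have m2: "(\<lambda>x. ennreal 0) \<in> borel_measurable lborel" by measurable
  have m3: "(\<lambda>x. ennreal (9 * (g x)^2)) \<in> borel_measurable lborel" by measurable
  have bd: "AE x in lborel. ennreal ((g x - F i x)^2) \<le> ennreal (9 * (g x)^2)" for i
  proof (intro AE_I2 ennreal_leI)
    fix x
    have "\<bar>g x - F i x\<bar> \<le> 3 * \<bar>g x\<bar>" using Fb'[of i x] by linarith
    then have "\<bar>g x - F i x\<bar>^2 \<le> (3 * \<bar>g x\<bar>)^2" by (intro power_mono) auto
    then show "(g x - F i x)^2 \<le> 9 * (g x)^2" by (simp add: power_mult_distrib)
  qed
  have wf: "(\<integral>\<^sup>+ x. ennreal (9 * (g x)^2) \<partial>lborel) < \<infinity>"
    using L2 by (simp add: ennreal_mult nn_integral_cmult ennreal_mult_less_top)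
  have cv: "AE x in lborel. (\<lambda>i. ennreal ((g x - F i x)^2)) \<longlonglongrightarrow> ennreal 0"
  proof (intro AE_I2 tendsto_ennrealI)
    fix x
    have "(\<lambda>i. (g x - F i x)^2) \<longlonglongrightarrow> (g x - g x)^2"
      by (intro tendsto_intros Fl)
    then show "(\<lambda>i. (g x - F i x)^2) \<longlonglongrightarrow> 0" by simp
  qed
  have lim: "(\<lambda>i. \<integral>\<^sup>+ x. ennreal ((g x - F i x)^2) \<partial>lborel) \<longlonglongrightarrow> 0"
    using nn_integral_dominated_convergence[OF m1 m2 m3 bd wf cv] by simp
  have "ennreal 0 < ennreal e" using e by (simp add: ennreal_lessI)
  then have "eventually (\<lambda>i. (\<integral>\<^sup>+ x. ennreal ((g x - F i x)^2) \<partial>lborel) < ennreal e) sequentially"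
    using lim unfolding order_tendsto_iff by simp
  then obtain i where i: "(\<integral>\<^sup>+ x. ennreal ((g x - F i x)^2) \<partial>lborel) < ennreal e"
    by (meson eventually_sequentially order.refl)
  have fin: "finite (range (F i))" using simple_functionD(1)[OF Fs[of i]] by simp
  have "(\<integral>\<^sup>+ x. ennreal ((F i x)^2) \<partial>lborel) \<le> (\<integral>\<^sup>+ x. 4 * ennreal ((g x)^2) \<partial>lborel)"
  proof (intro nn_integral_mono)
    fix x
    have "\<bar>F i x\<bar>^2 \<le> (2 * \<bar>g x\<bar>)^2" using Fb'[of i x] by (intro power_mono) auto
    then have "(F i x)^2 \<le> 4 * (g x)^2" by (simp add: power_mult_distrib)
    then show "ennreal ((F i x)^2) \<le> 4 * ennreal ((g x)^2)"
      by (metis ennreal_leI ennreal_mult ennreal_numeral zero_le_numeral zero_le_power2)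
  qed
  also have "\<dots> < \<infinity>" using L2 by (simp add: nn_integral_cmult ennreal_mult_less_top)
  finally have "Tcont (F i)" by (intro Tcont_simple[OF Fm fin])
  then show "\<exists>v. v \<in> borel_measurable borel \<and> Tcont v \<and>
                 (\<integral>\<^sup>+ x. ennreal ((g x - v x)^2) \<partial>lborel) \<le> ennreal e"
    using i Fm[of i] by (intro exI[of _ "F i"]) auto
qed

lemma pt_bound:
  fixes f :: "'a::euclidean_space \<Rightarrow> ennreal" and \<nu> :: "real \<Rightarrow> ennreal"
  assumes f_lower: "\<And>z. z \<noteq> 0 \<Longrightarrow> f z \<ge> 1 / (ennreal (norm z ^ DIM('a)) * \<nu> (norm z))"
    and mono: "mono_on {0<..} \<nu>"
    and z: "0 < norm z" "norm z \<le> r" and nr: "\<nu> r < ennreal \<epsilon>" and e: "\<epsilon> > 0"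
  shows "1 \<le> f z * ennreal (r ^ DIM('a) * \<epsilon>)"
proof -
  define b where "b = ennreal (norm z ^ DIM('a)) * \<nu> (norm z)"
  have r: "r > 0" using z by linarith
  have nz: "\<nu> (norm z) \<le> \<nu> r" using mono z r by (intro mono_onD[OF mono]) auto
  have Ceq: "ennreal (r ^ DIM('a) * \<epsilon>) = ennreal (r ^ DIM('a)) * ennreal \<epsilon>"
    using r e by (simp add: ennreal_mult)
  have "b \<le> ennreal (r ^ DIM('a)) * ennreal \<epsilon>"
    unfolding b_def
  proof (rule mult_mono)
    show "ennreal (norm z ^ DIM('a)) \<le> ennreal (r ^ DIM('a))"
      using z by (intro ennreal_leI power_mono) auto
    show "\<nu> (norm z) \<le> ennreal \<epsilon>" using nz nr by simp
  qed auto
  then have bC: "b \<le> ennreal (r ^ DIM('a) * \<epsilon>)" using Ceq by simp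
  have fz: "f z \<ge> 1 / b" using f_lower[of z] z unfolding b_def by auto
  have Cpos: "ennreal (r ^ DIM('a) * \<epsilon>) > 0" using r e by (simp add: ennreal_lessI)
  show ?thesis
  proof (cases "b = 0")
    case True
    then have "f z = \<infinity>" using fz by (simp add: top_unique)
    then show ?thesis using Cpos r e by (simp add: ennreal_top_mult)
  next
    case False
    have "b < \<infinity>" using bC by (simp add: le_less_trans)
    then have "1 = 1 / b * b" using False by (simp add: ennreal_divide_times)
    also have "\<dots> \<le> f z * b" using fz by (intro mult_right_mono) auto
    also have "\<dots> \<le> f z * ennreal (r ^ DIM('a) * \<epsilon>)" using bC by (intro mult_left_mono) auto
    finally show ?thesis .
  qed
qed

lemma prod_meas:
  fixes \<phi> :: "'a::euclidean_space \<Rightarrow> real"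
  assumes [measurable]: "\<phi> \<in> borel_measurable borel"
  shows "(\<lambda>(z, x). ennreal ((\<phi> (x + z) - \<phi> x)^2)) \<in> borel_measurable (lborel \<Otimes>\<^sub>M (lborel :: 'a measure))"
  by measurable

lemma tr_err_meas:
  fixes \<phi> :: "'a::euclidean_space \<Rightarrow> real"
  assumes [measurable]: "\<phi> \<in> borel_measurable borel"
  shows "tr_err \<phi> \<in> borel_measurable borel"
proof -
  have "(\<lambda>z. \<integral>\<^sup>+ x. ennreal ((\<phi> (x + z) - \<phi> x)^2) \<partial>lborel) \<in> borel_measurable (lborel :: 'a measure)"
    by (rule lborel.borel_measurable_nn_integral[OF prod_meas[OF assms]])
  then show ?thesis unfolding tr_err_def[abs_def] by simp
qed

lemma B_eq:
  fixes \<phi> :: "'a::euclidean_space \<Rightarrow> real" and f :: "'a \<Rightarrow> ennreal"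
  assumes [measurable]: "\<phi> \<in> borel_measurable borel" "f \<in> borel_measurable borel"
  shows "(\<integral>\<^sup>+ x. (\<integral>\<^sup>+ z. indicator {z. r < norm z} z * ennreal ((\<phi> (x + z) - \<phi> x)^2) \<partial>density lborel f) \<partial>lborel)
       = (\<integral>\<^sup>+ z. f z * indicator {z. r < norm z} z * tr_err \<phi> z \<partial>lborel)"
proof -
  have "(\<integral>\<^sup>+ x. (\<integral>\<^sup>+ z. indicator {z. r < norm z} z * ennreal ((\<phi> (x + z) - \<phi> x)^2) \<partial>density lborel f) \<partial>lborel)
      = (\<integral>\<^sup>+ x. (\<integral>\<^sup>+ z. f z * (indicator {z. r < norm z} z * ennreal ((\<phi> (x + z) - \<phi> x)^2)) \<partial>lborel) \<partial>lborel)"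
    by (intro nn_integral_cong nn_integral_density) measurable
  also have "\<dots> = (\<integral>\<^sup>+ z. (\<integral>\<^sup>+ x. f z * (indicator {z. r < norm z} z * ennreal ((\<phi> (x + z) - \<phi> x)^2)) \<partial>lborel) \<partial>lborel)"
    by (rule lborel_pair.Fubini'[symmetric]) measurable
  also have "\<dots> = (\<integral>\<^sup>+ z. f z * indicator {z. r < norm z} z * tr_err \<phi> z \<partial>lborel)"
    unfolding tr_err_def
    by (intro nn_integral_cong) (simp add: nn_integral_cmult mult.assoc)
  finally show ?thesis .
qed

lemma enn2_eq:
  assumes "0 \<le> b" "0 \<le> c"
  shows "ennreal (2*b + 2*c) = 2 * ennreal b + 2 * ennreal c"
  using assms by (simp add: ennreal_plus ennreal_mult)

lemma key_bound:
  fixes \<phi> :: "'a::euclidean_space \<Rightarrow> real" and f :: "'a \<Rightarrow> ennreal" and \<nu> :: "real \<Rightarrow> ennreal"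
  assumes \<phi>m[measurable]: "\<phi> \<in> borel_measurable borel" and fm[measurable]: "f \<in> borel_measurable borel"
    and f_lower: "\<And>z. z \<noteq> 0 \<Longrightarrow> f z \<ge> 1 / (ennreal (norm z ^ DIM('a)) * \<nu> (norm z))"
    and mono: "mono_on {0<..} \<nu>"
    and s: "s > 0" "norm y \<le> s" "r \<le> s"
    and nu5: "\<nu> (5 * s) < ennreal \<epsilon>" and e: "\<epsilon> > 0"
  shows "tr_err \<phi> y * ennreal (unit_ball_vol DIM('a) * s ^ DIM('a))
     \<le> ennreal (\<epsilon> * (2 * (4 * s) ^ DIM('a) + 2 * (5 * s) ^ DIM('a))) *
        (\<integral>\<^sup>+ z. f z * indicator {z. r < norm z} z * tr_err \<phi> z \<partial>lborel)"
proof -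
  define G where "G = tr_err \<phi>"
  have Gm[measurable]: "G \<in> borel_measurable borel" unfolding G_def by (rule tr_err_meas[OF \<phi>m])
  define I where "I = (\<integral>\<^sup>+ z. f z * indicator {z. r < norm z} z * G z \<partial>lborel)"
  define C4 where "C4 = ennreal ((4 * s) ^ DIM('a) * \<epsilon>)"
  define C5 where "C5 = ennreal ((5 * s) ^ DIM('a) * \<epsilon>)"
  obtain b :: 'a where b: "b \<in> Basis" using nonempty_Basis by blast
  define c where "c = (3 * s) *\<^sub>R b"
  have nc: "norm c = 3 * s" using b s by (simp add: c_def)
  define A where "A = ball c s"
  have Ab[measurable]: "A \<in> sets borel" by (simp add: A_def)
  have mA: "emeasure lborel A = ennreal (unit_ball_vol DIM('a) * s ^ DIM('a))"
    unfolding A_def using s by (intro emeasure_ball) auto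
  have zA: "2 * s < norm z \<and> norm z \<le> 4 * s" if "z \<in> A" for z
  proof -
    have d: "norm (c - z) < s" using that by (simp add: A_def dist_norm)
    have "norm c - norm (c - z) \<le> norm z" using norm_triangle_ineq2[of c "c - z"] by simp
    moreover have "norm z \<le> norm c + norm (c - z)" using norm_triangle_ineq4[of c "c - z"] by simp
    ultimately show ?thesis using d nc by linarith
  qed
  have zyA: "s < norm w \<and> norm w \<le> 5 * s" if "w + y \<in> A" for w
  proof -
    have h: "2 * s < norm (w + y) \<and> norm (w + y) \<le> 4 * s" using zA[OF that] .
    have "norm (w + y) - norm y \<le> norm w" using norm_triangle_ineq2[of "w + y" y] by simp
    moreover have "norm w \<le> norm (w + y) + norm y" using norm_triangle_ineq4[of "w + y" y] by simp
    ultimately show ?thesis using h s by linarith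
  qed
  have nu4: "\<nu> (4 * s) < ennreal \<epsilon>"
    using mono_onD[OF mono, of "4 * s" "5 * s"] s nu5 by auto
  have step1: "G y \<le> 2 * G z + 2 * G (z - y)" for z
  proof -
    have "G y \<le> (\<integral>\<^sup>+ x. 2 * ennreal ((\<phi> (x + z) - \<phi> x)^2) + 2 * ennreal ((\<phi> (x + y) - \<phi> (x + z))^2) \<partial>lborel)"
      unfolding G_def tr_err_def
    proof (intro nn_integral_mono enn_le2)
      fix x
      show "(\<phi> (x + y) - \<phi> x)^2 \<le> 2 * (\<phi> (x + z) - \<phi> x)^2 + 2 * (\<phi> (x + y) - \<phi> (x + z))^2"
        by (smt (verit) sum_squares_ge_zero power2_sum zero_le_power2 power2_diff)
    qed auto
    also have "\<dots> = 2 * G z + 2 * (\<integral>\<^sup>+ x. ennreal ((\<phi> (x + y) - \<phi> (x + z))^2) \<partial>lborel)"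
      unfolding G_def tr_err_def by (simp add: nn_integral_add nn_integral_cmult)
    also have "(\<integral>\<^sup>+ x. ennreal ((\<phi> (x + y) - \<phi> (x + z))^2) \<partial>lborel) = G (z - y)"
    proof -
      have "(\<integral>\<^sup>+ x. ennreal ((\<phi> (x + y) - \<phi> (x + z))^2) \<partial>lborel)
          = (\<integral>\<^sup>+ x. (\<lambda>u. ennreal ((\<phi> u - \<phi> (u + (z - y)))^2)) (x + y) \<partial>lborel)"
        by (simp add: algebra_simps)
      also have "\<dots> = (\<integral>\<^sup>+ u. ennreal ((\<phi> u - \<phi> (u + (z - y)))^2) \<partial>lborel)"
        by (rule nn_integral_translate) measurable
      also have "\<dots> = G (z - y)"
        unfolding G_def tr_err_def by (simp add: power2_commute)
      finally show ?thesis .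
    qed
    finally show ?thesis .
  qed
  define P where "P = (\<integral>\<^sup>+ z. indicator A z * G z \<partial>lborel)"
  define Q where "Q = (\<integral>\<^sup>+ z. indicator A z * G (z - y) \<partial>lborel)"
  have S1: "G y * emeasure lborel A \<le> 2 * P + 2 * Q"
  proof -
  have "G y * emeasure lborel A = (\<integral>\<^sup>+ z. G y * indicator A z \<partial>lborel)"
    by (simp add: nn_integral_cmult_indicator)
  also have "\<dots> \<le> (\<integral>\<^sup>+ z. 2 * (indicator A z * G z) + 2 * (indicator A z * G (z - y)) \<partial>lborel)"
  proof (intro nn_integral_mono)
    fix z
    show "G y * indicator A z \<le> 2 * (indicator A z * G z) + 2 * (indicator A z * G (z - y))"
      using step1[of z] by (simp add: indicator_def)
  qed
  also have "\<dots> = 2 * P + 2 * Q"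
    unfolding P_def Q_def by (simp add: nn_integral_add nn_integral_cmult)
  finally show ?thesis .
  qed
  have S2: "P \<le> C4 * I"
  proof -
    have "(\<integral>\<^sup>+ z. indicator A z * G z \<partial>lborel) \<le> (\<integral>\<^sup>+ z. C4 * (f z * indicator {z. r < norm z} z * G z) \<partial>lborel)"
    proof (intro nn_integral_mono)
      fix z
      show "indicator A z * G z \<le> C4 * (f z * indicator {z. r < norm z} z * G z)"
      proof (cases "z \<in> A")
        case True
        have h: "2 * s < norm z \<and> norm z \<le> 4 * s" using zA[OF True] .
        have "1 \<le> f z * C4" unfolding C4_def
          using h s e nu4 by (intro pt_bound[OF f_lower mono]) auto
        then have "1 * G z \<le> (f z * C4) * G z" by (intro mult_right_mono) auto
        moreover have "r < norm z" using h s by linarith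
        ultimately show ?thesis using True by (simp add: mult_ac)
      qed simp
    qed
    also have "\<dots> = C4 * I" unfolding I_def by (simp add: nn_integral_cmult)
    finally show ?thesis unfolding P_def .
  qed
  have S3: "Q \<le> C5 * I"
  proof -
    have "(\<integral>\<^sup>+ z. indicator A z * G (z - y) \<partial>lborel) = (\<integral>\<^sup>+ w. (\<lambda>z. indicator A z * G (z - y)) (w + y) \<partial>lborel)"
      by (rule nn_integral_translate[symmetric]) measurable
    also have "\<dots> \<le> (\<integral>\<^sup>+ w. C5 * (f w * indicator {z. r < norm z} w * G w) \<partial>lborel)"
    proof (intro nn_integral_mono)
      fix w
      show "(\<lambda>z. indicator A z * G (z - y)) (w + y) \<le> C5 * (f w * indicator {z. r < norm z} w * G w)"
      proof (cases "w + y \<in> A")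
        case True
        have h: "s < norm w \<and> norm w \<le> 5 * s" using zyA[OF True] .
        have "1 \<le> f w * C5" unfolding C5_def
          using h s e nu5 by (intro pt_bound[OF f_lower mono]) auto
        then have "1 * G w \<le> (f w * C5) * G w" by (intro mult_right_mono) auto
        moreover have "r < norm w" using h s by linarith
        ultimately show ?thesis using True by (simp add: mult_ac)
      qed simp
    qed
    also have "\<dots> = C5 * I" unfolding I_def by (simp add: nn_integral_cmult)
    finally show ?thesis unfolding Q_def .
  qed
  have "G y * emeasure lborel A \<le> 2 * (C4 * I) + 2 * (C5 * I)"
    using S1 S2 S3 by (meson add_mono mult_left_mono order_trans zero_le)
  also have "2 * (C4 * I) + 2 * (C5 * I) = (2 * C4 + 2 * C5) * I"
    by (simp add: algebra_simps)
  also have "2 * C4 + 2 * C5 = ennreal (\<epsilon> * (2 * (4 * s) ^ DIM('a) + 2 * (5 * s) ^ DIM('a)))"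
    unfolding C4_def C5_def using s e
    by (subst enn2_eq[symmetric]) (auto simp: algebra_simps)
  finally show ?thesis
    unfolding mA G_def I_def by (simp add: mult_ac)
qed

lemma ennreal_div_le:
  assumes "X * ennreal a \<le> ennreal b" "0 < a"
  shows "X \<le> ennreal (b / a)"
proof (cases X)
  case (real x)
  then have "ennreal (x * a) \<le> ennreal b" using assms by (simp add: ennreal_mult)
  then have "x * a \<le> b \<or> x * a \<le> 0" by (auto simp add: ennreal_le_iff2)
  then show ?thesis
  proof
    assume "x * a \<le> b"
    then have "x \<le> b / a" using assms(2) by (simp add: pos_le_divide_eq)
    then show ?thesis using real by (simp add: ennreal_leI)
  next
    assume "x * a \<le> 0"
    then have "x = 0" using real assms(2) by (simp add: mult_le_0_iff)
    then show ?thesis using real by simp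
  qed
next
  case top
  then show ?thesis using assms by (simp add: ennreal_top_mult top_unique)
qed

lemma L2_bound:
  fixes g :: "'a::euclidean_space \<Rightarrow> real"
  assumes [measurable]: "g \<in> borel_measurable borel" and le: "tr_err g y \<le> ennreal (e^2)" and e: "e \<ge> 0"
  shows "ennreal (L2_norm (\<lambda>x. g (x + y) - g x)) \<le> ennreal e"
proof -
  have "integral\<^sup>L lborel (\<lambda>x. (g (x + y) - g x)^2) = enn2real (tr_err g y)"
    unfolding tr_err_def by (rule integral_eq_nn_integral) auto
  also have "\<dots> \<le> e^2"
  proof (cases "tr_err g y = \<infinity>")
    case True then show ?thesis by simp
  next
    case False
    then obtain t where t: "tr_err g y = ennreal t" "t \<ge> 0" by (cases "tr_err g y") auto
    then have "t \<le> e^2" using le by (simp add: ennreal_le_iff)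
    then show ?thesis using t by simp
  qed
  finally have "L2_norm (\<lambda>x. g (x + y) - g x) \<le> sqrt (e^2)"
    unfolding L2_norm_def by (intro real_sqrt_le_mono)
  then show ?thesis using e by (intro ennreal_leI) simp
qed

lemma half_ennreal: "2 * ((X::ennreal) / 2) = X"
proof (cases X)
  case (real x)
  have "ennreal x / 2 = ennreal (x / 2)"
    using real by (metis divide_ennreal ennreal_numeral zero_less_numeral)
  moreover have "2 * ennreal (x / 2) = ennreal (2 * (x / 2))"
    using real by (subst ennreal_mult) auto
  ultimately show ?thesis using real by simp
next
  case top
  then show ?thesis by (simp add: ennreal_top_divide ennreal_mult_top)
qed

theorem mainTheorem17:
  fixes \<mu> :: "'a::euclidean_space measure"
    and f :: "'a \<Rightarrow> ennreal"
    and \<nu> :: "real \<Rightarrow> ennreal"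
    and \<phi> :: "nat \<Rightarrow> 'a \<Rightarrow> real"
  assumes levy: "levy_measure \<mu>"
    and f_meas: "f \<in> borel_measurable borel"
    and dens: "\<mu> = density lborel f"
    and f_lower: "\<And>z. z \<noteq> 0 \<Longrightarrow>
         f z \<ge> 1 / (ennreal (norm z ^ DIM('a)) * \<nu> (norm z))"
    and \<nu>_mono: "mono_on {0<..} \<nu>"
    and \<nu>_lim: "(\<nu> \<longlongrightarrow> 0) (at_right 0)"
    and \<phi>_meas: "\<And>n. \<phi> n \<in> borel_measurable lborel"
    and \<phi>_L2: "\<And>n. integrable lborel (\<lambda>x. (\<phi> n x)^2)"
    and bdd: "(SUP n\<in>{1::nat..}. (1/2) *
          (\<integral>\<^sup>+ x. (\<integral>\<^sup>+ z. indicator {z. norm z > 1 / real n} z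
                * ennreal ((\<phi> n (x + z) - \<phi> n x)^2) \<partial>\<mu>) \<partial>lborel)) < \<infinity>"
  shows "((\<lambda>y. SUP n\<in>{1::nat..}. ennreal (L2_norm (\<lambda>x. \<phi> n (x + y) - \<phi> n x)))
           \<longlongrightarrow> 0) (at 0)"
proof -
  have \<phi>m[measurable]: "\<And>n. \<phi> n \<in> borel_measurable borel" using \<phi>_meas by simp
  have fm[measurable]: "f \<in> borel_measurable borel" by (rule f_meas)
  have \<phi>L2: "(\<integral>\<^sup>+ x. ennreal ((\<phi> n x)^2) \<partial>lborel) < \<infinity>" for n
    using integrableD(2)[OF \<phi>_L2[of n]] by (simp add: top.not_eq_extremum)
  have Tc: "Tcont (\<phi> n)" for n by (rule Tcont_L2[OF \<phi>m \<phi>L2])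
  define S where "S = (SUP n\<in>{1::nat..}. (1/2) *
          (\<integral>\<^sup>+ x. (\<integral>\<^sup>+ z. indicator {z. norm z > 1 / real n} z
                * ennreal ((\<phi> n (x + z) - \<phi> n x)^2) \<partial>\<mu>) \<partial>lborel))"
  have Sfin: "S < \<infinity>" using bdd by (simp add: S_def)
  define Bn where "Bn n = (\<integral>\<^sup>+ z. f z * indicator {z. 1 / real n < norm z} z * tr_err (\<phi> n) z \<partial>lborel)" for n
  have Bn_le: "Bn n \<le> 2 * S" if n: "n \<ge> 1" for n
  proof -
    have "(1/2) * Bn n \<le> S"
      unfolding S_def Bn_def using n
      by (intro SUP_upper2[of n]) (auto simp: dens B_eq[OF \<phi>m fm])
    then have "2 * ((1/2) * Bn n) \<le> 2 * S" by (intro mult_left_mono) auto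
    moreover have "2 * ((1/2) * Bn n) = Bn n"
      using half_ennreal[of "Bn n"] by (simp add: ennreal_divide_times)
    ultimately show ?thesis by simp
  qed
  have "2 * S < \<infinity>" using Sfin by (simp add: ennreal_mult_less_top)
  then obtain M where M: "2 * S = ennreal M" "M \<ge> 0" by (cases "2 * S") auto
  show ?thesis
  proof (rule ennreal_tendsto_0I)
    fix e :: real assume e: "e > 0"
    define \<delta> where "\<delta> = e^2"
    have \<delta>: "\<delta> > 0" using e by (simp add: \<delta>_def)
    define V where "V = unit_ball_vol (real DIM('a))"
    have V: "V > 0" by (simp add: V_def)
    define K :: real where "K = 2 * 4 ^ DIM('a) + 2 * 5 ^ DIM('a)"
    have K: "K > 0" unfolding K_def by (intro add_pos_pos mult_pos_pos zero_less_power) auto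
    define \<epsilon> where "\<epsilon> = \<delta> * V / (K * (M + 1))"
    have \<epsilon>: "\<epsilon> > 0" using \<delta> V K M by (simp add: \<epsilon>_def)
    have "ennreal 0 < ennreal \<epsilon>" using \<epsilon> by (simp add: ennreal_lessI)
    then have "eventually (\<lambda>t. \<nu> t < ennreal \<epsilon>) (at_right 0)"
      using \<nu>_lim unfolding order_tendsto_iff by simp
    then obtain d where d: "d > 0" "\<And>t. 0 < t \<Longrightarrow> t < d \<Longrightarrow> \<nu> t < ennreal \<epsilon>"
      unfolding eventually_at_right[of 0 1, OF zero_less_one] by auto
    define s0 where "s0 = d / 10"
    have s0: "s0 > 0" using d by (simp add: s0_def)
    obtain N :: nat where N: "N > 0" "inverse (real N) < s0"
      using ex_inverse_of_nat_less[OF s0] by auto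
    have big: "tr_err (\<phi> n) y \<le> ennreal \<delta>" if n: "n \<ge> N" and y: "norm y < s0" for n y
    proof -
      define s where "s = max (norm y) (1 / real n)"
      have n0: "real n > 0" using n N by simp
      have invn: "1 / real n \<le> inverse (real N)"
        using n N by (simp add: divide_simps)
      have s_pos: "s > 0" using n0 by (simp add: s_def less_max_iff_disj)
      have s_lt: "s < s0" using y invn N by (simp add: s_def)
      have nu5: "\<nu> (5 * s) < ennreal \<epsilon>" using d(2)[of "5 * s"] s_pos s_lt by (simp add: s0_def)
      have kb: "tr_err (\<phi> n) y * ennreal (V * s ^ DIM('a))
          \<le> ennreal (\<epsilon> * (2 * (4 * s) ^ DIM('a) + 2 * (5 * s) ^ DIM('a))) * Bn n"
        unfolding V_def Bn_def
        by (rule key_bound[OF \<phi>m fm f_lower \<nu>_mono s_pos _ _ nu5 \<epsilon>]) (auto simp: s_def)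
      have eqK: "\<epsilon> * (2 * (4 * s) ^ DIM('a) + 2 * (5 * s) ^ DIM('a)) = \<epsilon> * K * s ^ DIM('a)"
        by (simp add: K_def power_mult_distrib algebra_simps)
      have "Bn n \<le> ennreal M" using Bn_le[of n] n N M by simp
      then have "tr_err (\<phi> n) y * ennreal (V * s ^ DIM('a)) \<le> ennreal (\<epsilon> * K * s ^ DIM('a)) * ennreal M"
      proof -
        have "ennreal (\<epsilon> * (2 * (4 * s) ^ DIM('a) + 2 * (5 * s) ^ DIM('a))) * Bn n
            \<le> ennreal (\<epsilon> * K * s ^ DIM('a)) * ennreal M"
          unfolding eqK using \<open>Bn n \<le> ennreal M\<close> by (rule mult_left_mono) simp
        then show ?thesis using kb by (rule order_trans[rotated])
      qed
      also have "\<dots> = ennreal (\<epsilon> * K * s ^ DIM('a) * M)"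
        using \<epsilon> K s_pos M by (simp add: ennreal_mult)
      finally have "tr_err (\<phi> n) y \<le> ennreal (\<epsilon> * K * s ^ DIM('a) * M / (V * s ^ DIM('a)))"
        using V s_pos by (intro ennreal_div_le) auto
      also have "\<epsilon> * K * s ^ DIM('a) * M / (V * s ^ DIM('a)) = \<delta> * M / (M + 1)"
      proof -
        have sp: "s ^ DIM('a) > 0" using s_pos by simp
        have Mp: "M + 1 > 0" using M by simp
        have "\<epsilon> * K * s ^ DIM('a) * M / (V * s ^ DIM('a)) = \<epsilon> * K * M / V"
          using sp V s_pos by (simp add: field_simps)
        also have "\<dots> = \<delta> * M / (M + 1)"
        proof -
          have h: "\<epsilon> * (K * (M + 1)) = \<delta> * V" unfolding \<epsilon>_def using K Mp V by simp
          have ne: "M + 1 \<noteq> 0" using Mp by simp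
          have "\<epsilon> * (K * (M + 1)) * M / (V * (M + 1)) = ((\<epsilon> * K * M) * (M + 1)) / (V * (M + 1))"
            by (simp only: mult_ac)
          also have "\<dots> = \<epsilon> * K * M / V" using ne by (rule nonzero_mult_divide_mult_cancel_right)
          finally have "\<epsilon> * K * M / V = \<epsilon> * (K * (M + 1)) * M / (V * (M + 1))" by simp
          also have "\<dots> = \<delta> * M / (M + 1)" unfolding h using V Mp by simp
          finally show ?thesis .
        qed
        finally show ?thesis .
      qed
      also have "\<dots> \<le> \<delta>"
        using \<delta> M by (simp add: divide_simps)
      finally show ?thesis by (simp add: ennreal_leI)
    qed
    have small: "eventually (\<lambda>y. \<forall>n\<in>{1..<N}. tr_err (\<phi> n) y \<le> ennreal \<delta>) (at 0)"
    proof (rule eventually_ball_finite)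
      show "finite {1..<N}" by simp
      show "\<forall>n\<in>{1..<N}. eventually (\<lambda>y. tr_err (\<phi> n) y \<le> ennreal \<delta>) (at 0)"
      proof
        fix n
        have "ennreal 0 < ennreal \<delta>" using \<delta> by (simp add: ennreal_lessI)
        then have "eventually (\<lambda>y. tr_err (\<phi> n) y < ennreal \<delta>) (at 0)"
          using Tc[of n] unfolding Tcont_def order_tendsto_iff by simp
        then show "eventually (\<lambda>y. tr_err (\<phi> n) y \<le> ennreal \<delta>) (at 0)"
          by (rule eventually_mono) simp
      qed
    qed
    have near: "eventually (\<lambda>y. norm y < s0) (at 0)"
      unfolding eventually_at using s0 by (auto simp: dist_norm)
    show "eventually (\<lambda>y. (SUP n\<in>{1::nat..}. ennreal (L2_norm (\<lambda>x. \<phi> n (x + y) - \<phi> n x))) \<le> ennreal e) (at 0)"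
    proof (rule eventually_mono[OF eventually_conj[OF small near]])
      fix y assume y: "(\<forall>n\<in>{1..<N}. tr_err (\<phi> n) y \<le> ennreal \<delta>) \<and> norm y < s0"
      show "(SUP n\<in>{1::nat..}. ennreal (L2_norm (\<lambda>x. \<phi> n (x + y) - \<phi> n x))) \<le> ennreal e"
      proof (rule SUP_least)
        fix n :: nat assume n: "n \<in> {1..}"
        have "tr_err (\<phi> n) y \<le> ennreal (e^2)"
        proof (cases "n < N")
          case True then show ?thesis using y n by (auto simp: \<delta>_def)
        next
          case False then show ?thesis using big[of n y] y by (simp add: \<delta>_def)
        qed
        then show "ennreal (L2_norm (\<lambda>x. \<phi> n (x + y) - \<phi> n x)) \<le> ennreal e"
          using e by (intro L2_bound[OF \<phi>m]) auto
      qed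
    qed
  qed
qed

end
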